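(* Let $(L,\sim,\preceq,p)$ and $(L,\sim,\preceq,p')$ be planar dendritic systems with the same $L$, $\sim$ and $\preceq$. If $p(i,j)=p'(i,j)$ for all $i,j\in L$ (where $i$ denotes the class of $(i,i)$), then $p=p'$. That is, $p$ is uniquely determined by $\preceq$ and $\{p(i,j):i,j\in L\}$.
   Context: Let $L\subseteq\mathbb{N}$ be finite or countably infinite. A planar dendritic system $(L,\sim,\preceq,p)$ consists of an equivalence relation $\sim$ on $L\times L$, whose set of classes is denoted $T$ (the class of $(i,j)$ is written $(i,j)$); a partial order $\preceq$ on $T$; and a function $p:T\times T\to\{0,1,-1\}$, such that for all $i,j,k,\ell\in L$: (C1) $(i,j)\sim(j,i)$, and $(i,j)\sim(k,k)$ iff $i=j=k$; (C2) $(i,j)\preceq(i,i)$; (C3) $(i,j)\preceq(k,\ell)$ and $(k,\ell)\preceq(i,j)$ iff $(i,j)\sim(k,\ell)$; (C4) the $\preceq$-minimum of $\{(i,j),(k,\ell),(i,\ell),(i,k),(j,\ell),(j,k)\}$ exists in $T$; and for all $x,y,z\in T$: (P1) $p(x,y)=-p(y,x)$; (P2) $p(x,y)=0$ iff $x\preceq y$ or $y\preceq x$; (P3) if $p(x,y)=1$ and $p(y,z)=1$ then $p(x,z)=1$; (P4) if $p(x,y)=1$ and $y\preceq z$ then $p(x,z)=1$. The classes $(i,i)$ are the leaves, written $i$. *)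

theory Defs
  imports Main
begin

definition cls :: "(nat \<times> nat) rel \<Rightarrow> nat \<Rightarrow> nat \<Rightarrow> (nat \<times> nat) set" where
  "cls R i j = R `` {(i, j)}"

definition classes :: "nat set \<Rightarrow> (nat \<times> nat) rel \<Rightarrow> (nat \<times> nat) set set" where
  "classes L R = (L \<times> L) // R"

definition planar_dendritic_system ::
  "nat set \<Rightarrow> (nat \<times> nat) rel \<Rightarrow> ((nat \<times> nat) set \<Rightarrow> (nat \<times> nat) set \<Rightarrow> bool)
     \<Rightarrow> ((nat \<times> nat) set \<Rightarrow> (nat \<times> nat) set \<Rightarrow> int) \<Rightarrow> bool" where
  "planar_dendritic_system L R le p \<longleftrightarrow>
     equiv (L \<times> L) R \<and>
     \<comment> \<open>le is a partial order on T\<close>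
     (\<forall>x\<in>classes L R. le x x) \<and>
     (\<forall>x\<in>classes L R. \<forall>y\<in>classes L R. \<forall>z\<in>classes L R. le x y \<longrightarrow> le y z \<longrightarrow> le x z) \<and>
     (\<forall>x\<in>classes L R. \<forall>y\<in>classes L R. le x y \<longrightarrow> le y x \<longrightarrow> x = y) \<and>
     \<comment> \<open>p takes values in {0,1,-1} on T x T\<close>
     (\<forall>x\<in>classes L R. \<forall>y\<in>classes L R. p x y \<in> {0, 1, -1}) \<and>
     \<comment> \<open>(C1)\<close>
     (\<forall>i\<in>L. \<forall>j\<in>L. cls R i j = cls R j i) \<and>
     (\<forall>i\<in>L. \<forall>j\<in>L. \<forall>k\<in>L. cls R i j = cls R k k \<longleftrightarrow> (i = j \<and> j = k)) \<and>
     \<comment> \<open>(C2)\<close>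
     (\<forall>i\<in>L. \<forall>j\<in>L. le (cls R i j) (cls R i i)) \<and>
     \<comment> \<open>(C3)\<close>
     (\<forall>i\<in>L. \<forall>j\<in>L. \<forall>k\<in>L. \<forall>l\<in>L.
        (le (cls R i j) (cls R k l) \<and> le (cls R k l) (cls R i j)) \<longleftrightarrow> cls R i j = cls R k l) \<and>
     \<comment> \<open>(C4)\<close>
     (\<forall>i\<in>L. \<forall>j\<in>L. \<forall>k\<in>L. \<forall>l\<in>L.
        (let S = {cls R i j, cls R k l, cls R i l, cls R i k, cls R j l, cls R j k}
         in \<exists>m\<in>S. \<forall>y\<in>S. le m y)) \<and>
     \<comment> \<open>(P1)\<close>
     (\<forall>x\<in>classes L R. \<forall>y\<in>classes L R. p x y = - p y x) \<and>
     \<comment> \<open>(P2)\<close>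
     (\<forall>x\<in>classes L R. \<forall>y\<in>classes L R. p x y = 0 \<longleftrightarrow> (le x y \<or> le y x)) \<and>
     \<comment> \<open>(P3)\<close>
     (\<forall>x\<in>classes L R. \<forall>y\<in>classes L R. \<forall>z\<in>classes L R.
        p x y = 1 \<longrightarrow> p y z = 1 \<longrightarrow> p x z = 1) \<and>
     \<comment> \<open>(P4)\<close>
     (\<forall>x\<in>classes L R. \<forall>y\<in>classes L R. \<forall>z\<in>classes L R.
        p x y = 1 \<longrightarrow> le y z \<longrightarrow> p x z = 1)"

end

theory Submission
  imports Defs
begin

lemma cls_in:
  assumes "i \<in> L" "j \<in> L" shows "cls R i j \<in> classes L R"
  using assms unfolding cls_def classes_def by (simp add: quotientI)

lemma classes_ex:
  assumes "x \<in> classes L R" shows "\<exists>i\<in>L. \<exists>j\<in>L. x = cls R i j"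
  using assms unfolding cls_def classes_def quotient_def by auto

context
  fixes L R le p
  assumes PDS: "planar_dendritic_system L R le p"
begin
private lemma D: "(\<forall>x\<in>classes L R. \<forall>y\<in>classes L R. \<forall>z\<in>classes L R. le x y \<longrightarrow> le y z \<longrightarrow> le x z) \<and>
  (\<forall>x\<in>classes L R. \<forall>y\<in>classes L R. p x y \<in> {0, 1, -1}) \<and>
  (\<forall>i\<in>L. \<forall>j\<in>L. le (cls R i j) (cls R i i)) \<and>
  (\<forall>x\<in>classes L R. \<forall>y\<in>classes L R. p x y = - p y x) \<and>
  (\<forall>x\<in>classes L R. \<forall>y\<in>classes L R. p x y = 0 \<longleftrightarrow> (le x y \<or> le y x)) \<and>
  (\<forall>x\<in>classes L R. \<forall>y\<in>classes L R. \<forall>z\<in>classes L R. p x y = 1 \<longrightarrow> p y z = 1 \<longrightarrow> p x z = 1) \<and>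
  (\<forall>x\<in>classes L R. \<forall>y\<in>classes L R. \<forall>z\<in>classes L R. p x y = 1 \<longrightarrow> le y z \<longrightarrow> p x z = 1)"
  using PDS unfolding planar_dendritic_system_def by (elim conjE) (intro conjI; assumption)

lemma pds_trans: "u \<in> classes L R \<Longrightarrow> v \<in> classes L R \<Longrightarrow> w \<in> classes L R \<Longrightarrow> le u v \<Longrightarrow> le v w \<Longrightarrow> le u w"
  using D[THEN conjunct1] by blast
lemma pds_vals: "u \<in> classes L R \<Longrightarrow> v \<in> classes L R \<Longrightarrow> p u v \<in> {0,1,-1}"
  using D[THEN conjunct2, THEN conjunct1] by blast
lemma pds_C2: "i \<in> L \<Longrightarrow> j \<in> L \<Longrightarrow> le (cls R i j) (cls R i i)"
  using D[THEN conjunct2, THEN conjunct2, THEN conjunct1] by blast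
lemma pds_P1: "u \<in> classes L R \<Longrightarrow> v \<in> classes L R \<Longrightarrow> p u v = - p v u"
  using D[THEN conjunct2, THEN conjunct2, THEN conjunct2, THEN conjunct1] by blast
lemma pds_P2: "u \<in> classes L R \<Longrightarrow> v \<in> classes L R \<Longrightarrow> p u v = 0 \<longleftrightarrow> (le u v \<or> le v u)"
  using D[THEN conjunct2, THEN conjunct2, THEN conjunct2, THEN conjunct2, THEN conjunct1] by blast
lemma pds_P3: "u \<in> classes L R \<Longrightarrow> v \<in> classes L R \<Longrightarrow> w \<in> classes L R \<Longrightarrow> p u v = 1 \<Longrightarrow> p v w = 1 \<Longrightarrow> p u w = 1"
  using D[THEN conjunct2, THEN conjunct2, THEN conjunct2, THEN conjunct2, THEN conjunct2, THEN conjunct1] by blast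
lemma pds_P4: "u \<in> classes L R \<Longrightarrow> v \<in> classes L R \<Longrightarrow> w \<in> classes L R \<Longrightarrow> p u v = 1 \<Longrightarrow> le v w \<Longrightarrow> p u w = 1"
  using D[THEN conjunct2, THEN conjunct2, THEN conjunct2, THEN conjunct2, THEN conjunct2, THEN conjunct2] by blast
end

lemma key:
  assumes P: "planar_dendritic_system L R le p"
    and P': "planar_dendritic_system L R le p'"
    and agree: "\<forall>i\<in>L. \<forall>j\<in>L. p (cls R i i) (cls R j j) = p' (cls R i i) (cls R j j)"
    and ij: "i \<in> L" "j \<in> L" "k \<in> L" "l \<in> L"
    and h1: "p (cls R i j) (cls R k l) = 1"
    and h2: "p' (cls R i j) (cls R k l) = -1"
  shows False
proof -
  define x where "x = cls R i j"
  define y where "y = cls R k l"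
  define a where "a = cls R i i"
  define b where "b = cls R k k"
  have xc: "x \<in> classes L R" and yc: "y \<in> classes L R" and ac: "a \<in> classes L R"
    and bc: "b \<in> classes L R"
    using ij cls_in unfolding x_def y_def a_def b_def by auto
  have xa: "le x a" using pds_C2[OF P] ij unfolding x_def a_def by blast
  have yb: "le y b" using pds_C2[OF P] ij unfolding y_def b_def by blast
  note tr = pds_trans[OF P]
  have pxb: "p x b = 1" using pds_P4[OF P xc yc bc] h1 yb unfolding x_def y_def by blast
  have p'yx: "p' y x = 1" using pds_P1[OF P' yc xc] h2 unfolding x_def y_def by simp
  have p'ya: "p' y a = 1" using pds_P4[OF P' yc xc ac] p'yx xa by blast
  have q: "p a b = p' a b" using agree ij unfolding a_def b_def by blast
  have "p a b \<in> {0,1,-1}" using pds_vals[OF P ac bc] .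
  moreover have "p a b \<noteq> -1"
  proof
    assume "p a b = -1"
    hence "p b a = 1" using pds_P1[OF P bc ac] by simp
    hence "p x a = 1" using pds_P3[OF P xc bc ac] pxb by blast
    moreover have "p x a = 0" using pds_P2[OF P xc ac] xa by blast
    ultimately show False by simp
  qed
  moreover have "p a b \<noteq> 1"
  proof
    assume "p a b = 1"
    hence "p' a b = 1" using q by simp
    hence "p' y b = 1" using pds_P3[OF P' yc ac bc] p'ya by blast
    moreover have "p' y b = 0" using pds_P2[OF P' yc bc] yb by blast
    ultimately show False by simp
  qed
  moreover have "p a b \<noteq> 0"
  proof
    assume "p a b = 0"
    hence "le a b \<or> le b a" using pds_P2[OF P ac bc] by blast
    thus False
    proof
      assume "le a b"
      hence "le x b" using tr[OF xc ac bc xa] by blast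
      hence "p x b = 0" using pds_P2[OF P xc bc] by blast
      thus False using pxb by simp
    next
      assume "le b a"
      hence "le y a" using tr[OF yc bc ac yb] by blast
      hence "p' y a = 0" using pds_P2[OF P' yc ac] by blast
      thus False using p'ya by simp
    qed
  qed
  ultimately show False by blast
qed

theorem lemma2p2:
  fixes L :: "nat set" and R :: "(nat \<times> nat) rel"
    and le :: "(nat \<times> nat) set \<Rightarrow> (nat \<times> nat) set \<Rightarrow> bool"
    and p p' :: "(nat \<times> nat) set \<Rightarrow> (nat \<times> nat) set \<Rightarrow> int"
  assumes "planar_dendritic_system L R le p"
    and "planar_dendritic_system L R le p'"
    and "\<forall>i\<in>L. \<forall>j\<in>L. p (cls R i i) (cls R j j) = p' (cls R i i) (cls R j j)"
  shows "\<forall>x\<in>classes L R. \<forall>y\<in>classes L R. p x y = p' x y"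
proof (intro ballI)
  fix x y assume xc: "x \<in> classes L R" and yc: "y \<in> classes L R"
  obtain i j where ij: "i \<in> L" "j \<in> L" "x = cls R i j" using classes_ex[OF xc] by blast
  obtain k l where kl: "k \<in> L" "l \<in> L" "y = cls R k l" using classes_ex[OF yc] by blast
  have agree': "\<forall>i\<in>L. \<forall>j\<in>L. p' (cls R i i) (cls R j j) = p (cls R i i) (cls R j j)"
    using assms(3) by simp
  have v1: "p x y \<in> {0,1,-1}"
    using pds_vals[OF assms(1) xc yc] .
  have v2: "p' x y \<in> {0,1,-1}"
    using pds_vals[OF assms(2) xc yc] .
  have z: "p x y = 0 \<longleftrightarrow> p' x y = 0"
    using pds_P2[OF assms(1) xc yc] pds_P2[OF assms(2) xc yc] by blast
  have n1: "\<not> (p x y = 1 \<and> p' x y = -1)"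
    using key[OF assms(1,2,3) ij(1,2) kl(1,2)] ij kl by blast
  have n2: "\<not> (p' x y = 1 \<and> p x y = -1)"
    using key[OF assms(2,1) agree' ij(1,2) kl(1,2)] ij kl by blast
  show "p x y = p' x y" using v1 v2 z n1 n2 by auto
qed

end
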